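(* Let $z^*=(L^*,\xi^* )$ be a global minimizer of problem (P). Let there be a constant $c>0$ and a direction $u\in\mathbb R^2$ with $\|u\|=1$ such that $u^T\xi^*_\tau(\tau)\ge c$ for almost all $\tau\in]0,1[$. Then for any $z=(L,\xi)\in Z$ with $\|z-z^*\|_{Z^\infty}\le R$ and $R<c$, $$\inf_{0\ne\lambda\in L^2(]0,1[)}\ \sup_{\delta z\in\delta Z}\ \frac{\int_0^1\lambda\,(2\xi_\tau^T\delta\xi_\tau-2L\,\delta L)\,d\tau}{\|\lambda\|_{L^2}\,\|\delta z\|_{Z^2}}\ \ge\ \kappa(R):=(c-R)\Big[\tfrac38+2\Big(\tfrac{\bar v+\bar c_0}{\bar v-\bar c_0}+\tfrac{R}{\tilde L}\Big)^2\Big]^{-1/2}>0.$$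
   Context: Fix an airspeed $\bar v>0$, points $x_O\neq x_D\in\mathbb R^2$, $\tilde L:=\|x_D-x_O\|$, and a wind field $w\in C^3(\mathbb R^2,\mathbb R^2)$ with $\|w(x)\|<\bar v$. Let $\Omega\subset\mathbb R^2$ be an ellipse with foci $x_O,x_D$ containing every globally optimal trajectory, and let $\bar c_0<\bar v$ with $\|w(x)\|\le\bar c_0$ for all $x\in\Omega$. Let $f(x,p)=\frac{-p^Tw(x)+\sqrt{(p^Tw(x))^2+(\bar v^2-w(x)^Tw(x))p^Tp}}{\bar v^2-w(x)^Tw(x)}$, $X=\{\xi\in W^{1,\infty}(]0,1[,\mathbb R^2):\xi(0)=x_O,\xi(1)=x_D\}$, $\delta X=W_0^{1,\infty}(]0,1[,\mathbb R^2)$, $\xi_\tau$ the derivative, $T(\xi)=\int_0^1f(\xi,\xi_\tau)d\tau$. Problem (P): minimize $T(\xi)$ over $\xi\in X$, $L\in\mathbb R$ subject to $\|\xi_\tau(\tau)\|^2=L^2$ for a.a. $\tau$. $Z=\mathbb R\times X$, $\delta Z=\mathbb R\times\delta X$, $\delta z=(\delta L,\delta\xi)$. Norms ($\|\cdot\|$ Euclidean pointwise): $\|z\|_{Z^\infty}=|L|+\|\xi\|_{L^\infty}+\|\xi_\tau\|_{L^\infty}$, $\|z\|_{Z^2}=|L|+\|\xi\|_{L^2}+\|\xi_\tau\|_{L^2}$. *)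

theory Defs
  imports "HOL-Analysis.Analysis"
begin

type_synonym vec2 = "real^2"

text \<open>The interval ]0,1[ (up to a null set) with Lebesgue measure.\<close>
abbreviation M01 :: "real measure" where
  "M01 \<equiv> lebesgue_on {0..1}"

definition C1_map :: "('a::real_normed_vector \<Rightarrow> 'b::real_normed_vector) \<Rightarrow> bool" where
  "C1_map g \<longleftrightarrow> (\<exists>g'. (\<forall>x. (g has_derivative blinfun_apply (g' x)) (at x)) \<and> continuous_on UNIV g')"

definition C2_map :: "('a::real_normed_vector \<Rightarrow> 'b::real_normed_vector) \<Rightarrow> bool" where
  "C2_map g \<longleftrightarrow> (\<exists>g'. (\<forall>x. (g has_derivative blinfun_apply (g' x)) (at x)) \<and> C1_map g')"

definition C3_map :: "('a::real_normed_vector \<Rightarrow> 'b::real_normed_vector) \<Rightarrow> bool" where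
  "C3_map g \<longleftrightarrow> (\<exists>g'. (\<forall>x. (g has_derivative blinfun_apply (g' x)) (at x)) \<and> C2_map g')"

definition ftime :: "real \<Rightarrow> (vec2 \<Rightarrow> vec2) \<Rightarrow> vec2 \<Rightarrow> vec2 \<Rightarrow> real" where
  "ftime vbar w x p =
     (- (p \<bullet> w x) + sqrt ((p \<bullet> w x)\<^sup>2 + (vbar\<^sup>2 - w x \<bullet> w x) * (p \<bullet> p)))
     / (vbar\<^sup>2 - w x \<bullet> w x)"

text \<open>\<open>W1inf xi xi'\<close>: xi (continuous representative on [0,1]) lies in W^{1,\<infinity>}(]0,1[,R^2)
  and xi' is its (weak) derivative: xi' is Lebesgue measurable, essentially bounded on ]0,1[,
  and xi(t) = xi(0) + \<integral>_0^t xi' for all t in [0,1].\<close>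
definition W1inf :: "(real \<Rightarrow> vec2) \<Rightarrow> (real \<Rightarrow> vec2) \<Rightarrow> bool" where
  "W1inf xi xi' \<longleftrightarrow>
     xi' \<in> borel_measurable M01 \<and>
     integrable M01 xi' \<and>
     (\<exists>C. AE t in M01. norm (xi' t) \<le> C) \<and>
     (\<forall>t\<in>{0..1}. xi t = xi 0 + integral\<^sup>L (lebesgue_on {0..t}) xi')"

definition Linf_norm :: "(real \<Rightarrow> 'a::real_normed_vector) \<Rightarrow> real" where
  "Linf_norm g = Inf {C. 0 \<le> C \<and> (AE t in M01. norm (g t) \<le> C)}"

definition L2_norm :: "(real \<Rightarrow> 'a::real_normed_vector) \<Rightarrow> real" where
  "L2_norm g = sqrt (integral\<^sup>L M01 (\<lambda>t. (norm (g t))\<^sup>2))"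

definition L2_fun :: "(real \<Rightarrow> real) \<Rightarrow> bool" where
  "L2_fun g \<longleftrightarrow> g \<in> borel_measurable M01 \<and> integrable M01 (\<lambda>t. (g t)\<^sup>2)"

definition Ttime :: "real \<Rightarrow> (vec2 \<Rightarrow> vec2) \<Rightarrow> (real \<Rightarrow> vec2) \<Rightarrow> (real \<Rightarrow> vec2) \<Rightarrow> real" where
  "Ttime vbar w xi xi' = integral\<^sup>L M01 (\<lambda>t. ftime vbar w (xi t) (xi' t))"

definition in_X :: "vec2 \<Rightarrow> vec2 \<Rightarrow> (real \<Rightarrow> vec2) \<Rightarrow> (real \<Rightarrow> vec2) \<Rightarrow> bool" where
  "in_X xO xD xi xi' \<longleftrightarrow> W1inf xi xi' \<and> xi 0 = xO \<and> xi 1 = xD"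

definition in_dX :: "(real \<Rightarrow> vec2) \<Rightarrow> (real \<Rightarrow> vec2) \<Rightarrow> bool" where
  "in_dX dxi dxi' \<longleftrightarrow> W1inf dxi dxi' \<and> dxi 0 = 0 \<and> dxi 1 = 0"

definition feasibleP :: "vec2 \<Rightarrow> vec2 \<Rightarrow> real \<Rightarrow> (real \<Rightarrow> vec2) \<Rightarrow> (real \<Rightarrow> vec2) \<Rightarrow> bool" where
  "feasibleP xO xD L xi xi' \<longleftrightarrow> in_X xO xD xi xi' \<and> (AE t in M01. (norm (xi' t))\<^sup>2 = L\<^sup>2)"

definition global_min_P ::
  "real \<Rightarrow> (vec2 \<Rightarrow> vec2) \<Rightarrow> vec2 \<Rightarrow> vec2 \<Rightarrow> real \<Rightarrow> (real \<Rightarrow> vec2) \<Rightarrow> (real \<Rightarrow> vec2) \<Rightarrow> bool" where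
  "global_min_P vbar w xO xD L xi xi' \<longleftrightarrow>
     feasibleP xO xD L xi xi' \<and>
     (\<forall>L2 eta eta'. feasibleP xO xD L2 eta eta' \<longrightarrow> Ttime vbar w xi xi' \<le> Ttime vbar w eta eta')"

definition Zinf_norm :: "real \<Rightarrow> (real \<Rightarrow> vec2) \<Rightarrow> (real \<Rightarrow> vec2) \<Rightarrow> real" where
  "Zinf_norm L xi xi' = \<bar>L\<bar> + Linf_norm xi + Linf_norm xi'"

definition Z2_norm :: "real \<Rightarrow> (real \<Rightarrow> vec2) \<Rightarrow> (real \<Rightarrow> vec2) \<Rightarrow> real" where
  "Z2_norm L xi xi' = \<bar>L\<bar> + L2_norm xi + L2_norm xi'"

end

theory Submission
  imports Defs
begin


lemma M01_fin: "finite_measure M01"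
  by (rule finite_measure_lebesgue_on) auto

lemma M01_meas: "measure M01 {0..1} = 1"
  by (simp add: measure_restrict_space)

lemma M01_int_const [simp]: "integral\<^sup>L M01 (\<lambda>t. c) = (c::real)"
proof -
  have "integral\<^sup>L M01 (\<lambda>t. c) = measure M01 (space M01) *\<^sub>R c" by (rule lebesgue_integral_const)
  also have "\<dots> = c" using M01_meas by (simp only: space_lebesgue_on scaleR_one)
  finally show ?thesis .
qed

lemma M01_int_t: "integral\<^sup>L M01 (\<lambda>t. t) = 1/2"
proof -
  have int: "integrable M01 (\<lambda>t::real. t)"
    by (rule continuous_imp_integrable_real) (intro continuous_intros)
  have "integral\<^sup>L M01 (\<lambda>t. t) = integral {0..1} (\<lambda>t::real. t)"
    by (rule lebesgue_integral_eq_integral[OF int]) auto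
  also have "\<dots> = 1/2" by simp
  finally show ?thesis .
qed

lemma M01_ex: assumes "AE t in M01. P t" shows "\<exists>t. P t"
proof -
  have "ae_filter M01 \<noteq> bot"
    unfolding ae_filter_eq_bot_iff by (simp add: emeasure_restrict_space)
  then show ?thesis using eventually_happens[OF assms] by blast
qed

lemma Linf_props:
  fixes g :: "real \<Rightarrow> 'a::real_normed_vector"
  assumes "\<exists>C. AE t in M01. norm (g t) \<le> C"
  shows "0 \<le> Linf_norm g" "AE t in M01. norm (g t) \<le> Linf_norm g"
proof -
  define S where "S = {C. 0 \<le> C \<and> (AE t in M01. norm (g t) \<le> C)}"
  obtain C where C: "AE t in M01. norm (g t) \<le> C" using assms by blast
  have "max C 0 \<in> S" unfolding S_def using C by (auto elim: eventually_mono)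
  then have ne: "S \<noteq> {}" by blast
  have bdd: "bdd_below S" unfolding S_def by (rule bdd_belowI[of _ 0]) auto
  have L: "Linf_norm g = Inf S" unfolding Linf_norm_def S_def by simp
  show "0 \<le> Linf_norm g" unfolding L using ne by (rule cInf_greatest) (auto simp: S_def)
  have "\<forall>n::nat. AE t in M01. norm (g t) \<le> Inf S + 1 / Suc n"
  proof
    fix n :: nat
    have "Inf S < Inf S + 1 / Suc n" by simp
    then obtain C' where "C' \<in> S" "C' < Inf S + 1 / Suc n"
      using cInf_lessD[OF ne] by blast
    then show "AE t in M01. norm (g t) \<le> Inf S + 1 / Suc n"
      unfolding S_def by (auto elim: eventually_mono)
  qed
  then have "AE t in M01. \<forall>n::nat. norm (g t) \<le> Inf S + 1 / Suc n"
    by (simp add: AE_all_countable)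
  then show "AE t in M01. norm (g t) \<le> Linf_norm g"
  proof (rule eventually_mono)
    fix t assume h: "\<forall>n::nat. norm (g t) \<le> Inf S + 1 / Suc n"
    show "norm (g t) \<le> Linf_norm g"
    proof (rule ccontr)
      assume "\<not> ?thesis"
      then have "0 < norm (g t) - Inf S" unfolding L by simp
      then obtain n where "1 / real (Suc n) < norm (g t) - Inf S"
        using reals_Archimedean by (metis inverse_eq_divide)
      moreover have "norm (g t) \<le> Inf S + 1 / Suc n" using h by blast
      ultimately show False by linarith
    qed
  qed
qed


lemma abs_le_sq: "\<bar>x::real\<bar> \<le> 1 + x^2"
proof -
  have "0 \<le> (\<bar>x\<bar> - 1/2)^2" by simp
  moreover have "(\<bar>x\<bar> - 1/2)^2 = x^2 - \<bar>x\<bar> + 1/4"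
    by (simp add: power2_eq_square algebra_simps)
  ultimately show ?thesis by linarith
qed

lemma cs_fin:
  fixes f :: "'a \<Rightarrow> real"
  assumes fm: "finite_measure M" and meas: "f \<in> borel_measurable M"
    and sq: "integrable M (\<lambda>x. (f x)^2)"
  shows "integrable M f" "(integral\<^sup>L M f)^2 \<le> measure M (space M) * integral\<^sup>L M (\<lambda>x. (f x)^2)"
proof -
  have ic: "integrable M (\<lambda>x. c)" for c :: real
    using fm finite_measure.integrable_const by blast
  show intf: "integrable M f"
  proof (rule Bochner_Integration.integrable_bound[OF _ meas])
    show "integrable M (\<lambda>x. 1 + (f x)^2)" by (intro Bochner_Integration.integrable_add ic sq)
    show "AE x in M. norm (f x) \<le> norm (1 + (f x)^2)"
      using abs_le_sq by (intro AE_I2) auto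
  qed
  define \<mu> where "\<mu> = measure M (space M)"
  define I where "I = integral\<^sup>L M f"
  define J where "J = integral\<^sup>L M (\<lambda>x. (f x)^2)"
  have i1: "integrable M (\<lambda>x. \<mu>^2 * (f x)^2)" using sq by simp
  have i2: "integrable M (\<lambda>x. (2 * \<mu> * I) * f x)" using intf by simp
  have "0 \<le> integral\<^sup>L M (\<lambda>x. (\<mu> * f x - I)^2)"
    by (rule integral_nonneg_AE) simp
  also have "(\<lambda>x. (\<mu> * f x - I)^2) = (\<lambda>x. (\<mu>^2 * (f x)^2 - (2 * \<mu> * I) * f x) + I^2)"
    by (simp add: power2_eq_square algebra_simps)
  also have "integral\<^sup>L M \<dots> = integral\<^sup>L M (\<lambda>x. \<mu>^2 * (f x)^2 - (2 * \<mu> * I) * f x) + integral\<^sup>L M (\<lambda>x. I^2)"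
    by (rule Bochner_Integration.integral_add[OF Bochner_Integration.integrable_diff[OF i1 i2] ic])
  also have "integral\<^sup>L M (\<lambda>x. \<mu>^2 * (f x)^2 - (2 * \<mu> * I) * f x) = integral\<^sup>L M (\<lambda>x. \<mu>^2 * (f x)^2) - integral\<^sup>L M (\<lambda>x. (2 * \<mu> * I) * f x)"
    by (rule Bochner_Integration.integral_diff[OF i1 i2])
  also have "integral\<^sup>L M (\<lambda>x. \<mu>^2 * (f x)^2) = \<mu>^2 * J"
    unfolding J_def by (rule integral_mult_right_zero)
  also have "integral\<^sup>L M (\<lambda>x. (2 * \<mu> * I) * f x) = (2 * \<mu> * I) * I"
    unfolding I_def by (rule integral_mult_right_zero)
  also have "integral\<^sup>L M (\<lambda>x. I^2) = \<mu> * I^2"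
    unfolding \<mu>_def by simp
  finally have "0 \<le> \<mu> * (\<mu> * J - I^2)" by (simp add: power2_eq_square algebra_simps)
  moreover have "\<mu> \<ge> 0" unfolding \<mu>_def by simp
  ultimately have A: "\<mu> = 0 \<or> I^2 \<le> \<mu> * J"
    using zero_le_mult_iff[of \<mu> "\<mu> * J - I^2"] by auto
  show "(integral\<^sup>L M f)^2 \<le> measure M (space M) * integral\<^sup>L M (\<lambda>x. (f x)^2)"
  proof (cases "\<mu> = 0")
    case True
    have "emeasure M (space M) = ennreal \<mu>"
      using finite_measure.emeasure_eq_measure[OF fm] \<mu>_def by simp
    then have "emeasure M (space M) = 0" using True by simp
    then have "ae_filter M = bot" by (simp add: ae_filter_eq_bot_iff)
    then have "AE x in M. f x = 0" by (metis eventually_bot)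
    then have "I = 0" unfolding I_def by (rule integral_eq_zero_AE)
    then show ?thesis using True \<mu>_def I_def by simp
  next
    case False then show ?thesis using A \<mu>_def I_def J_def by simp
  qed
qed

lemma Icc_sets_M01: "{0..t} \<inter> space M01 \<in> sets M01"
  unfolding space_lebesgue_on sets_restrict_space
  by (rule image_eqI[of _ _ "{0..t}"]) auto

lemma Icc_sets_M01': assumes "t \<le> 1" shows "{0..t} \<in> sets M01"
proof -
  have eq: "{0..t} \<inter> space M01 = {0..t}" using assms by auto
  show ?thesis using Icc_sets_M01[of t] by (simp only: eq)
qed

lemma sub_restrict: "0 \<le> t \<Longrightarrow> t \<le> 1 \<Longrightarrow> lebesgue_on {0..t} = restrict_space M01 {0..t}"
  by (subst restrict_restrict_space) (auto simp: Int_absorb1)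

lemma AE_sub:
  assumes "AE x in M01. P x" "0 \<le> t" "t \<le> 1"
  shows "AE x in lebesgue_on {0..t}. P x"
proof -
  have "AE x in M01. x \<in> {0..t} \<longrightarrow> P x" using assms(1) by (auto elim: eventually_mono)
  then show ?thesis unfolding sub_restrict[OF assms(2,3)]
    by (subst AE_restrict_space_iff[OF Icc_sets_M01])
qed

lemma int_sub_le:
  fixes g :: "real \<Rightarrow> real"
  assumes "integrable M01 g" "\<And>x. 0 \<le> g x" "0 \<le> t" "t \<le> 1"
  shows "integral\<^sup>L (lebesgue_on {0..t}) g \<le> integral\<^sup>L M01 g"
proof -
  have "integral\<^sup>L (lebesgue_on {0..t}) g = integral\<^sup>L M01 (\<lambda>x. indicator {0..t} x *\<^sub>R g x)"
    unfolding sub_restrict[OF assms(3,4)] by (rule integral_restrict_space[OF Icc_sets_M01])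
  also have "\<dots> \<le> integral\<^sup>L M01 g"
  proof (rule integral_mono)
    show "integrable M01 (\<lambda>x. indicator {0..t} x *\<^sub>R g x)"
      using assms(1) Icc_sets_M01'[OF assms(4)] by (rule integrable_mult_indicator[rotated])
  qed (use assms in \<open>auto simp: indicator_def\<close>)
  finally show ?thesis .
qed

lemma meas_sub: "0 \<le> t \<Longrightarrow> measure (lebesgue_on {0..t}) {0..t} = t"
  by (simp add: measure_restrict_space)

lemma xi_bdd:
  assumes "W1inf xi xi'"
  shows "\<exists>C. AE t in M01. norm (xi t) \<le> C"
proof -
  obtain C where C: "AE t in M01. norm (xi' t) \<le> C" using assms unfolding W1inf_def by blast
  have B: "norm (xi t) \<le> norm (xi 0) + \<bar>C\<bar>" if t: "t \<in> {0..1}" for t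
  proof -
    have eq: "xi t = xi 0 + integral\<^sup>L (lebesgue_on {0..t}) xi'" using assms t unfolding W1inf_def by blast
    have 1: "norm (xi t) \<le> norm (xi 0) + norm (integral\<^sup>L (lebesgue_on {0..t}) xi')"
      unfolding eq by (rule norm_triangle_ineq)
    have 2: "norm (integral\<^sup>L (lebesgue_on {0..t}) xi') \<le> integral\<^sup>L (lebesgue_on {0..t}) (\<lambda>s. norm (xi' s))"
      by (rule Bochner_Integration.integral_norm_bound)
    have 3: "integral\<^sup>L (lebesgue_on {0..t}) (\<lambda>s. norm (xi' s)) \<le> integral\<^sup>L (lebesgue_on {0..t}) (\<lambda>s. \<bar>C\<bar>)"
    proof (rule integral_mono_AE')
      have "AE x in lebesgue_on {0..t}. norm (xi' x) \<le> C"
        using AE_sub[OF C] t by auto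
      then show "AE x in lebesgue_on {0..t}. norm (xi' x) \<le> \<bar>C\<bar>"
        by (rule eventually_mono) (meson abs_ge_self order_trans)
    qed auto
    have 4: "integral\<^sup>L (lebesgue_on {0..t}) (\<lambda>s. \<bar>C\<bar>) = t * \<bar>C\<bar>"
      using t by (simp add: measure_restrict_space)
    have 5: "t * \<bar>C\<bar> \<le> \<bar>C\<bar>" using t by (intro mult_left_le_one_le) auto
    from 1 2 3 4 5 show ?thesis by linarith
  qed
  show ?thesis
    by (rule exI[of _ "norm (xi 0) + \<bar>C\<bar>"], rule AE_I2, rule B) simp
qed


lemma sub_meas:
  assumes "f \<in> borel_measurable M01" "0 \<le> t" "t \<le> 1"
  shows "f \<in> borel_measurable (lebesgue_on {0..t})"
  unfolding sub_restrict[OF assms(2,3)] by (rule measurable_restrict_space1[OF assms(1)])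

lemma int_null_0: "integral\<^sup>L (lebesgue_on {0..0::real}) f = (0::'b::{banach,second_countable_topology})"
proof -
  have "emeasure (lebesgue_on {0..0::real}) (space (lebesgue_on {0..0::real})) = 0"
    by (simp add: emeasure_restrict_space)
  then have "ae_filter (lebesgue_on {0..0::real}) = bot" by (simp add: ae_filter_eq_bot_iff)
  then have "AE x in lebesgue_on {0..0::real}. f x = 0" by (metis eventually_bot)
  then show ?thesis by (rule integral_eq_zero_AE)
qed

lemma dxi_lemma:
  fixes phi :: "real \<Rightarrow> real" and u :: vec2 and K :: real
  assumes meas: "phi \<in> borel_measurable M01"
    and bnd: "\<And>t. \<bar>phi t\<bar> \<le> K"
    and mean0: "integral\<^sup>L M01 phi = 0"
    and u: "norm u = 1"
  shows "in_dX (\<lambda>t. integral\<^sup>L (lebesgue_on {0..t}) (\<lambda>s. phi s *\<^sub>R u)) (\<lambda>s. phi s *\<^sub>R u)"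
    and "L2_norm (\<lambda>s. phi s *\<^sub>R u) = sqrt (integral\<^sup>L M01 (\<lambda>s. (phi s)^2))"
    and "L2_norm (\<lambda>t. integral\<^sup>L (lebesgue_on {0..t}) (\<lambda>s. phi s *\<^sub>R u))
           \<le> (3/4) * sqrt (integral\<^sup>L M01 (\<lambda>s. (phi s)^2))"
proof -
  define dxi where "dxi = (\<lambda>t. integral\<^sup>L (lebesgue_on {0..t}) (\<lambda>s. phi s *\<^sub>R u))"
  define q where "q = integral\<^sup>L M01 (\<lambda>s. (phi s)^2)"
  have K0: "0 \<le> K" using bnd[of 0] by linarith
  have sq: "(phi x)^2 \<le> K^2" for x
    using power_mono[OF bnd[of x] abs_ge_zero, of 2] by simp
  have ic: "integrable M01 (\<lambda>x. c)" for c :: real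
    using M01_fin finite_measure.integrable_const by blast
  have iphi: "integrable M01 phi"
    by (rule Bochner_Integration.integrable_bound[OF ic[of K] meas]) (use bnd K0 in auto)
  have meas2: "(\<lambda>s. (phi s)^2) \<in> borel_measurable M01" using meas by measurable
  have iphi2: "integrable M01 (\<lambda>s. (phi s)^2)"
  proof (rule Bochner_Integration.integrable_bound[OF ic[of "K^2"] meas2])
    show "AE x in M01. norm ((phi x)^2) \<le> norm (K^2)"
      using sq by (intro AE_I2) simp
  qed
  have q0: "0 \<le> q" unfolding q_def by (rule integral_nonneg_AE) simp
  have measv: "(\<lambda>s. phi s *\<^sub>R u) \<in> borel_measurable M01" using meas by measurable
  have dxi0: "dxi 0 = 0" unfolding dxi_def by (rule int_null_0)
  have dxi1: "dxi 1 = 0" unfolding dxi_def using mean0 iphi by simp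
  show "in_dX dxi (\<lambda>s. phi s *\<^sub>R u)"
    unfolding in_dX_def W1inf_def
  proof (intro conjI ballI)
    show "integrable M01 (\<lambda>s. phi s *\<^sub>R u)" using iphi by simp
    show "\<exists>C. AE t in M01. norm (phi t *\<^sub>R u) \<le> C"
      using bnd u by (intro exI[of _ K] AE_I2) simp
    show "dxi t = dxi 0 + integral\<^sup>L (lebesgue_on {0..t}) (\<lambda>s. phi s *\<^sub>R u)" for t
      using dxi0 by (simp add: dxi_def)
  qed (use measv dxi0 dxi1 in auto)
  show "L2_norm (\<lambda>s. phi s *\<^sub>R u) = sqrt (integral\<^sup>L M01 (\<lambda>s. (phi s)^2))"
    unfolding L2_norm_def using u by simp
  have pt: "(norm (dxi t))^2 \<le> t * q" if t: "t \<in> {0..1}" for t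
  proof -
    have t0: "0 \<le> t" and t1: "t \<le> 1" using t by auto
    have fm: "finite_measure (lebesgue_on {0..t})" by (rule finite_measure_lebesgue_on) auto
    have ms: "phi \<in> borel_measurable (lebesgue_on {0..t})" by (rule sub_meas[OF meas t0 t1])
    have is1: "integrable (lebesgue_on {0..t}) phi"
    proof (rule Bochner_Integration.integrable_bound[OF _ ms])
      show "integrable (lebesgue_on {0..t}) (\<lambda>s. K)" by simp
      show "AE x in lebesgue_on {0..t}. norm (phi x) \<le> norm K"
        using bnd K0 by (intro AE_I2) auto
    qed
    have "dxi t = integral\<^sup>L (lebesgue_on {0..t}) phi *\<^sub>R u" unfolding dxi_def using is1 by simp
    then have n: "norm (dxi t) = \<bar>integral\<^sup>L (lebesgue_on {0..t}) phi\<bar>" using u by simp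
    have ms2: "(\<lambda>s. (phi s)^2) \<in> borel_measurable (lebesgue_on {0..t})" by (rule sub_meas[OF meas2 t0 t1])
    have is2: "integrable (lebesgue_on {0..t}) (\<lambda>s. (phi s)^2)"
    proof (rule Bochner_Integration.integrable_bound[OF _ ms2])
      show "integrable (lebesgue_on {0..t}) (\<lambda>s. K^2)" by simp
      show "AE x in lebesgue_on {0..t}. norm ((phi x)^2) \<le> norm (K^2)"
        using sq by (intro AE_I2) simp
    qed
    have "(integral\<^sup>L (lebesgue_on {0..t}) phi)^2 \<le> measure (lebesgue_on {0..t}) (space (lebesgue_on {0..t})) * integral\<^sup>L (lebesgue_on {0..t}) (\<lambda>s. (phi s)^2)"
      by (rule cs_fin(2)[OF fm ms is2])
    also have "measure (lebesgue_on {0..t}) (space (lebesgue_on {0..t})) = t"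
      using t0 by (simp add: measure_restrict_space)
    also have "integral\<^sup>L (lebesgue_on {0..t}) (\<lambda>s. (phi s)^2) \<le> q"
      unfolding q_def by (rule int_sub_le[OF iphi2 _ t0 t1]) simp
    then have "t * integral\<^sup>L (lebesgue_on {0..t}) (\<lambda>s. (phi s)^2) \<le> t * q"
      using t0 by (rule mult_left_mono)
    finally show ?thesis using n by simp
  qed
  have it: "integrable M01 (\<lambda>t::real. t)"
    by (rule continuous_imp_integrable_real) (intro continuous_intros)
  have "integral\<^sup>L M01 (\<lambda>t. (norm (dxi t))^2) \<le> integral\<^sup>L M01 (\<lambda>t. t * q)"
  proof (rule integral_mono_AE')
    show "integrable M01 (\<lambda>t. t * q)" using it by simp
    show "AE t in M01. (norm (dxi t))^2 \<le> t * q" using pt by (intro AE_I2) simp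
    show "AE t in M01. 0 \<le> t * q" using q0 by (intro AE_I2) simp
  qed
  also have "integral\<^sup>L M01 (\<lambda>t. t * q) = q / 2" using M01_int_t by simp
  finally have "L2_norm dxi \<le> sqrt (q / 2)" unfolding L2_norm_def by simp
  also have "sqrt (q / 2) \<le> sqrt ((3/4)^2 * q)"
    using q0 by (intro real_sqrt_le_mono) (simp add: power2_eq_square)
  also have "\<dots> = (3/4) * sqrt q" by (simp add: real_sqrt_mult)
  finally show "L2_norm dxi \<le> (3/4) * sqrt (integral\<^sup>L M01 (\<lambda>s. (phi s)^2))"
    unfolding q_def .
qed


lemma trunc_limits:
  fixes lam a :: "real \<Rightarrow> real" and A :: real
  assumes lm: "lam \<in> borel_measurable M01" and l2: "integrable M01 (\<lambda>t. (lam t)^2)"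
    and am: "a \<in> borel_measurable M01" and ab: "AE t in M01. \<bar>a t\<bar> \<le> A"
  defines "T \<equiv> \<lambda>(N::nat) t. max (- real N) (min (real N) (lam t))"
  defines "mN \<equiv> \<lambda>N. integral\<^sup>L M01 (T N)"
  defines "m \<equiv> integral\<^sup>L M01 lam"
  shows "mN \<longlonglongrightarrow> m"
    and "(\<lambda>N. integral\<^sup>L M01 (\<lambda>t. lam t * a t * (T N t - mN N)))
           \<longlonglongrightarrow> integral\<^sup>L M01 (\<lambda>t. lam t * a t * (lam t - m))"
    and "(\<lambda>N. integral\<^sup>L M01 (\<lambda>t. (T N t - mN N)^2)) \<longlonglongrightarrow> integral\<^sup>L M01 (\<lambda>t. (lam t - m)^2)"
    and "\<And>N. T N \<in> borel_measurable M01" "\<And>N t. \<bar>T N t\<bar> \<le> real N" "\<And>N. integrable M01 (T N)"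
proof -
  have il: "integrable M01 lam" by (rule cs_fin(1)[OF M01_fin lm l2])
  have ial: "integrable M01 (\<lambda>t. \<bar>lam t\<bar>)" using il by simp
  show Tm: "T N \<in> borel_measurable M01" for N unfolding T_def using lm by measurable
  have Tb1: "\<bar>T N t\<bar> \<le> \<bar>lam t\<bar>" for N t unfolding T_def by auto
  show Tb2: "\<bar>T N t\<bar> \<le> real N" for N t unfolding T_def by auto
  have Tl: "(\<lambda>N. T N t) \<longlonglongrightarrow> lam t" for t
  proof (rule tendsto_eventually)
    obtain N0 :: nat where "\<bar>lam t\<bar> \<le> real N0" using real_arch_simple by blast
    then show "\<forall>\<^sub>F N in sequentially. T N t = lam t"
      unfolding eventually_sequentially T_def
      by (intro exI[of _ N0] allI impI) (auto simp: max_def min_def)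
  qed
  show iT: "integrable M01 (T N)" for N
    by (rule Bochner_Integration.integrable_bound[OF ial Tm]) (use Tb1 in \<open>intro AE_I2, auto\<close>)
  show mconv: "mN \<longlonglongrightarrow> m"
    unfolding mN_def m_def
    by (rule integral_dominated_convergence[OF lm Tm ial]) (use Tl Tb1 in \<open>auto intro!: AE_I2\<close>)
  define K where "K = integral\<^sup>L M01 (\<lambda>t. \<bar>lam t\<bar>)"
  have mK: "\<bar>mN N\<bar> \<le> K" for N
  proof -
    have "\<bar>mN N\<bar> \<le> integral\<^sup>L M01 (\<lambda>t. \<bar>T N t\<bar>)"
      unfolding mN_def using Bochner_Integration.integral_norm_bound[of M01 "T N"] by simp
    also have "\<dots> \<le> K" unfolding K_def
      using iT[of N] ial Tb1 by (intro integral_mono) auto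
    finally show ?thesis .
  qed
  have K0: "0 \<le> K" using mK[of 0] by linarith
  have dif: "\<bar>T N t - mN N\<bar> \<le> \<bar>lam t\<bar> + K" for N t
    using Tb1[of N t] mK[of N] by linarith
  show "(\<lambda>N. integral\<^sup>L M01 (\<lambda>t. lam t * a t * (T N t - mN N)))
           \<longlonglongrightarrow> integral\<^sup>L M01 (\<lambda>t. lam t * a t * (lam t - m))"
  proof (rule integral_dominated_convergence[where w="\<lambda>t. \<bar>A\<bar> * ((lam t)^2 + K * \<bar>lam t\<bar>)"])
    show "(\<lambda>t. lam t * a t * (lam t - m)) \<in> borel_measurable M01" using lm am by measurable
    show "(\<lambda>t. lam t * a t * (T N t - mN N)) \<in> borel_measurable M01" for N
      using lm am Tm[of N] by measurable
    show "integrable M01 (\<lambda>t. \<bar>A\<bar> * ((lam t)^2 + K * \<bar>lam t\<bar>))"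
      using l2 ial by simp
    show "AE t in M01. (\<lambda>N. lam t * a t * (T N t - mN N)) \<longlonglongrightarrow> lam t * a t * (lam t - m)"
      using Tl mconv by (intro AE_I2 tendsto_intros) auto
    show "AE t in M01. norm (lam t * a t * (T N t - mN N)) \<le> \<bar>A\<bar> * ((lam t)^2 + K * \<bar>lam t\<bar>)" for N
      using ab
    proof eventually_elim
      fix t assume at: "\<bar>a t\<bar> \<le> A"
      have "\<bar>a t\<bar> * \<bar>T N t - mN N\<bar> \<le> \<bar>A\<bar> * (\<bar>lam t\<bar> + K)"
        using at dif[of N t] by (intro mult_mono) auto
      then have "\<bar>lam t\<bar> * (\<bar>a t\<bar> * \<bar>T N t - mN N\<bar>) \<le> \<bar>lam t\<bar> * (\<bar>A\<bar> * (\<bar>lam t\<bar> + K))"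
        by (intro mult_left_mono) auto
      also have "\<bar>lam t\<bar> * (\<bar>A\<bar> * (\<bar>lam t\<bar> + K)) = \<bar>A\<bar> * ((lam t)^2 + K * \<bar>lam t\<bar>)"
        by (simp add: power2_eq_square algebra_simps abs_mult_self_eq)
      finally show "norm (lam t * a t * (T N t - mN N)) \<le> \<bar>A\<bar> * ((lam t)^2 + K * \<bar>lam t\<bar>)"
        by (simp add: abs_mult mult.assoc)
    qed
  qed
  show "(\<lambda>N. integral\<^sup>L M01 (\<lambda>t. (T N t - mN N)^2)) \<longlonglongrightarrow> integral\<^sup>L M01 (\<lambda>t. (lam t - m)^2)"
  proof (rule integral_dominated_convergence[where w="\<lambda>t. 2 * (lam t)^2 + 2 * K^2"])
    show "(\<lambda>t. (lam t - m)^2) \<in> borel_measurable M01" using lm by measurable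
    show "(\<lambda>t. (T N t - mN N)^2) \<in> borel_measurable M01" for N
      using Tm[of N] by measurable
    show "integrable M01 (\<lambda>t. 2 * (lam t)^2 + 2 * K^2)"
      using l2 M01_fin finite_measure.integrable_const by (intro Bochner_Integration.integrable_add) auto
    show "AE t in M01. (\<lambda>N. (T N t - mN N)^2) \<longlonglongrightarrow> (lam t - m)^2"
      using Tl mconv by (intro AE_I2 tendsto_intros) auto
    show "AE t in M01. norm ((T N t - mN N)^2) \<le> 2 * (lam t)^2 + 2 * K^2" for N
    proof (intro AE_I2)
      fix t
      have "(T N t - mN N)^2 = \<bar>T N t - mN N\<bar>^2" by simp
      also have "\<dots> \<le> (\<bar>lam t\<bar> + K)^2" using dif[of N t] by (intro power_mono) auto
      also have "\<dots> \<le> 2 * (lam t)^2 + 2 * K^2"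
      proof -
        have "0 \<le> (\<bar>lam t\<bar> - K)^2" by simp
        then show ?thesis by (simp add: power2_eq_square algebra_simps abs_mult_self_eq)
      qed
      finally show "norm ((T N t - mN N)^2) \<le> 2 * (lam t)^2 + 2 * K^2" by simp
    qed
  qed
qed


declare M01_meas[simp]

lemma N0_bound:
  fixes lam a :: "real \<Rightarrow> real" and a0 B :: real
  assumes lm: "lam \<in> borel_measurable M01" and l2: "integrable M01 (\<lambda>t. (lam t)^2)"
    and am: "a \<in> borel_measurable M01" and abnd: "AE t in M01. a0 \<le> a t \<and> a t \<le> a0 + 2 * B"
    and B0: "0 \<le> B"
  defines "m \<equiv> integral\<^sup>L M01 lam"
  defines "n0 \<equiv> sqrt (integral\<^sup>L M01 (\<lambda>t. (lam t - m)^2))"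
  shows "integral\<^sup>L M01 (\<lambda>t. (lam t - m)^2) = integral\<^sup>L M01 (\<lambda>t. (lam t)^2) - m^2"
    and "a0 * n0^2 - \<bar>m\<bar> * B * n0 \<le> integral\<^sup>L M01 (\<lambda>t. lam t * a t * (lam t - m))"
proof -
  have ic: "integrable M01 (\<lambda>x. c)" for c :: real
    using M01_fin finite_measure.integrable_const by blast
  have il: "integrable M01 lam" by (rule cs_fin(1)[OF M01_fin lm l2])
  define l0 where "l0 = (\<lambda>t. lam t - m)"
  have il0: "integrable M01 l0" unfolding l0_def using il ic by (rule Bochner_Integration.integrable_diff)
  have l0m: "l0 \<in> borel_measurable M01" unfolding l0_def using lm by measurable
  have int_l0: "integral\<^sup>L M01 l0 = 0"
    unfolding l0_def using il ic by (simp add: m_def M01_meas)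
  have eqf: "(\<lambda>t. (l0 t)^2) = (\<lambda>t. ((lam t)^2 - (2 * m) * lam t) + m^2)"
    unfolding l0_def by (simp add: power2_eq_square algebra_simps)
  have i1: "integrable M01 (\<lambda>t. (lam t)^2 - (2 * m) * lam t)"
    using l2 il by (intro Bochner_Integration.integrable_diff) auto
  have il02: "integrable M01 (\<lambda>t. (l0 t)^2)"
    unfolding eqf using i1 ic by (rule Bochner_Integration.integrable_add)
  have "integral\<^sup>L M01 (\<lambda>t. (l0 t)^2) = integral\<^sup>L M01 (\<lambda>t. (lam t)^2 - (2 * m) * lam t) + m^2"
    unfolding eqf using i1 ic by simp
  also have "integral\<^sup>L M01 (\<lambda>t. (lam t)^2 - (2 * m) * lam t) = integral\<^sup>L M01 (\<lambda>t. (lam t)^2) - 2 * m * m"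
    using l2 il by (simp add: m_def)
  finally have var: "integral\<^sup>L M01 (\<lambda>t. (l0 t)^2) = integral\<^sup>L M01 (\<lambda>t. (lam t)^2) - m^2"
    by (simp add: power2_eq_square)
  then show "integral\<^sup>L M01 (\<lambda>t. (lam t - m)^2) = integral\<^sup>L M01 (\<lambda>t. (lam t)^2) - m^2"
    unfolding l0_def .
  have q0: "0 \<le> integral\<^sup>L M01 (\<lambda>t. (l0 t)^2)" by (rule integral_nonneg_AE) simp
  have n0sq: "n0^2 = integral\<^sup>L M01 (\<lambda>t. (l0 t)^2)" unfolding n0_def l0_def using q0 l0_def by simp
  have n00: "0 \<le> n0" unfolding n0_def by simp
  define A where "A = \<bar>a0\<bar> + 2 * B"
  define h where "h = a0 + B"
  have aA: "AE t in M01. \<bar>a t\<bar> \<le> A" using abnd unfolding A_def by eventually_elim auto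
  have ah: "AE t in M01. \<bar>a t - h\<bar> \<le> B" using abnd unfolding h_def by eventually_elim auto
  have if1: "integrable M01 (\<lambda>t. a t * (l0 t)^2)"
  proof (rule Bochner_Integration.integrable_bound[where f="\<lambda>t. A * (l0 t)^2"])
    show "integrable M01 (\<lambda>t. A * (l0 t)^2)" using il02 by simp
    show "(\<lambda>t. a t * (l0 t)^2) \<in> borel_measurable M01" using am l0m by measurable
    show "AE t in M01. norm (a t * (l0 t)^2) \<le> norm (A * (l0 t)^2)"
      using aA by eventually_elim (auto simp: abs_mult intro: mult_right_mono)
  qed
  have if2: "integrable M01 (\<lambda>t. (a t - h) * l0 t)"
  proof (rule Bochner_Integration.integrable_bound[where f="\<lambda>t. B * \<bar>l0 t\<bar>"])
    show "integrable M01 (\<lambda>t. B * \<bar>l0 t\<bar>)" using il0 by simp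
    show "(\<lambda>t. (a t - h) * l0 t) \<in> borel_measurable M01" using am l0m by measurable
    show "AE t in M01. norm ((a t - h) * l0 t) \<le> norm (B * \<bar>l0 t\<bar>)"
      using ah by eventually_elim (use B0 in \<open>auto simp: abs_mult intro: mult_right_mono\<close>)
  qed
  have peq: "(\<lambda>t. lam t * a t * (lam t - m)) = (\<lambda>t. (a t * (l0 t)^2 + m * ((a t - h) * l0 t)) + (m * h) * l0 t)"
    unfolding l0_def by (simp add: power2_eq_square algebra_simps)
  have "integral\<^sup>L M01 (\<lambda>t. lam t * a t * (lam t - m))
      = integral\<^sup>L M01 (\<lambda>t. a t * (l0 t)^2) + m * integral\<^sup>L M01 (\<lambda>t. (a t - h) * l0 t) + (m * h) * integral\<^sup>L M01 l0"
    unfolding peq using if1 if2 il0 by simp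
  also have "\<dots> = integral\<^sup>L M01 (\<lambda>t. a t * (l0 t)^2) + m * integral\<^sup>L M01 (\<lambda>t. (a t - h) * l0 t)"
    using int_l0 by simp
  finally have Neq: "integral\<^sup>L M01 (\<lambda>t. lam t * a t * (lam t - m))
      = integral\<^sup>L M01 (\<lambda>t. a t * (l0 t)^2) + m * integral\<^sup>L M01 (\<lambda>t. (a t - h) * l0 t)" .
  have b1: "a0 * n0^2 \<le> integral\<^sup>L M01 (\<lambda>t. a t * (l0 t)^2)"
  proof -
    have "a0 * n0^2 = integral\<^sup>L M01 (\<lambda>t. a0 * (l0 t)^2)" using n0sq by simp
    also have "\<dots> \<le> integral\<^sup>L M01 (\<lambda>t. a t * (l0 t)^2)"
    proof (rule integral_mono_AE)
      show "integrable M01 (\<lambda>t. a0 * (l0 t)^2)" using il02 by simp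
      show "AE t in M01. a0 * (l0 t)^2 \<le> a t * (l0 t)^2"
        using abnd by eventually_elim (auto intro: mult_right_mono)
    qed (rule if1)
    finally show ?thesis .
  qed
  have ial0: "integrable M01 (\<lambda>t. \<bar>l0 t\<bar>)" using il0 by simp
  have cs: "(integral\<^sup>L M01 (\<lambda>t. \<bar>l0 t\<bar>))^2 \<le> measure M01 (space M01) * integral\<^sup>L M01 (\<lambda>t. (\<bar>l0 t\<bar>)^2)"
    by (rule cs_fin(2)[OF M01_fin]) (use l0m il02 in auto)
  then have "(integral\<^sup>L M01 (\<lambda>t. \<bar>l0 t\<bar>))^2 \<le> n0^2" using n0sq by (simp add: M01_meas)
  then have absl: "integral\<^sup>L M01 (\<lambda>t. \<bar>l0 t\<bar>) \<le> n0"
    using n00 by (rule power2_le_imp_le)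
  have b2: "\<bar>integral\<^sup>L M01 (\<lambda>t. (a t - h) * l0 t)\<bar> \<le> B * n0"
  proof -
    have "\<bar>integral\<^sup>L M01 (\<lambda>t. (a t - h) * l0 t)\<bar> \<le> integral\<^sup>L M01 (\<lambda>t. \<bar>(a t - h) * l0 t\<bar>)"
      using Bochner_Integration.integral_norm_bound[of M01 "\<lambda>t. (a t - h) * l0 t"] by simp
    also have "\<dots> \<le> integral\<^sup>L M01 (\<lambda>t. B * \<bar>l0 t\<bar>)"
    proof (rule integral_mono_AE)
      show "integrable M01 (\<lambda>t. \<bar>(a t - h) * l0 t\<bar>)" using if2 by simp
      show "integrable M01 (\<lambda>t. B * \<bar>l0 t\<bar>)" using ial0 by simp
      show "AE t in M01. \<bar>(a t - h) * l0 t\<bar> \<le> B * \<bar>l0 t\<bar>"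
        using ah by eventually_elim (auto simp: abs_mult intro: mult_right_mono)
    qed
    also have "\<dots> = B * integral\<^sup>L M01 (\<lambda>t. \<bar>l0 t\<bar>)" by simp
    also have "\<dots> \<le> B * n0" using absl B0 by (rule mult_left_mono)
    finally show ?thesis .
  qed
  have "\<bar>m * integral\<^sup>L M01 (\<lambda>t. (a t - h) * l0 t)\<bar> \<le> \<bar>m\<bar> * (B * n0)"
    unfolding abs_mult using b2 by (intro mult_left_mono) auto
  then have "- (\<bar>m\<bar> * B * n0) \<le> m * integral\<^sup>L M01 (\<lambda>t. (a t - h) * l0 t)"
    by (simp add: mult.assoc)
  with b1 Neq show "a0 * n0^2 - \<bar>m\<bar> * B * n0 \<le> integral\<^sup>L M01 (\<lambda>t. lam t * a t * (lam t - m))"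
    by linarith
qed


lemma arithB:
  fixes L m ell kap cc n0 a0 B N0 :: real
  assumes F: "2 * \<bar>L\<bar> * \<bar>m\<bar> < kap * ell" and cL: "cc \<le> \<bar>L\<bar>" and kc: "9 * kap^2 \<le> 4 * cc^2"
    and c0: "0 < cc" and k0: "0 < kap" and e0: "0 < ell"
    and n0: "n0 = sqrt (ell^2 - m^2)" and ca: "cc \<le> a0" and BL: "B \<le> \<bar>L\<bar>" and B0: "0 \<le> B"
    and N0: "a0 * n0^2 - \<bar>m\<bar> * B * n0 \<le> N0"
  shows "0 < n0" "(7/8) * kap * ell * n0 < N0"
proof -
  have L0: "0 < \<bar>L\<bar>" using c0 cL by linarith
  have s1: "(2 * \<bar>L\<bar> * \<bar>m\<bar>)^2 < (kap * ell)^2"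
    using F by (intro power_strict_mono) auto
  have cc2: "cc^2 \<le> L^2" using cL c0 by (metis abs_of_pos power2_abs power_mono less_imp_le)
  have s2: "(kap * ell)^2 \<le> (4/9) * L^2 * ell^2"
  proof -
    have "kap^2 \<le> (4/9) * L^2" using kc cc2 by linarith
    then have "kap^2 * ell^2 \<le> (4/9) * L^2 * ell^2" by (intro mult_right_mono) auto
    then show ?thesis by (simp add: power_mult_distrib)
  qed
  have "4 * L^2 * m^2 < 4 * L^2 * (ell^2 / 9)"
    using s1 s2 by (simp add: power_mult_distrib algebra_simps)
  then have m2: "m^2 < ell^2 / 9" using L0 by (simp add: mult_less_cancel_left)
  have q: "(15/16 * ell)^2 \<le> ell^2 - m^2"
  proof -
    have "(15/16 * ell)^2 = (225/256) * ell^2" by (simp add: power_mult_distrib power2_eq_square)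
    moreover have "0 \<le> ell^2" by simp
    ultimately show ?thesis using m2 by linarith
  qed
  have n0ge: "15/16 * ell \<le> n0" unfolding n0 using q e0
    by (metis less_eq_real_def mult_pos_pos real_le_rsqrt zero_less_divide_iff zero_less_numeral)
  show n0p: "0 < n0" using n0ge e0 by linarith
  have c15: "3/2 * kap \<le> cc"
  proof -
    have "(3/2 * kap)^2 = (9/4) * kap^2" by (simp add: power_mult_distrib power2_eq_square)
    then have "(3/2 * kap)^2 \<le> cc^2" using kc by linarith
    then show ?thesis using c0 by (rule power2_le_imp_le[OF _ less_imp_le])
  qed
  have t1: "cc * n0^2 \<le> a0 * n0^2" using ca by (intro mult_right_mono) auto
  have t2: "\<bar>m\<bar> * B * n0 \<le> \<bar>m\<bar> * \<bar>L\<bar> * n0" using BL n0p by (intro mult_right_mono mult_left_mono) auto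
  have t3: "\<bar>m\<bar> * \<bar>L\<bar> * n0 < (kap * ell / 2) * n0" using F n0p by (intro mult_strict_right_mono) (auto simp: mult.commute mult.left_commute)
  have t4: "(45/32) * kap * ell \<le> cc * n0"
  proof -
    have "(3/2 * kap) * (15/16 * ell) \<le> cc * n0"
      using c15 n0ge k0 e0 by (intro mult_mono) auto
    then show ?thesis by simp
  qed
  have t5: "(7/8) * kap * ell * n0 \<le> cc * n0^2 - (kap * ell / 2) * n0"
  proof -
    define X where "X = kap * ell"
    have X0: "0 < X" unfolding X_def using k0 e0 by simp
    have "(45/32) * X \<le> cc * n0" using t4 unfolding X_def by (simp add: mult.assoc)
    then have "(7/8) * X \<le> cc * n0 - X / 2" using X0 by linarith
    then have "(7/8) * kap * ell \<le> cc * n0 - kap * ell / 2" unfolding X_def by (simp add: mult.assoc)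
    then have "(7/8) * kap * ell * n0 \<le> (cc * n0 - kap * ell / 2) * n0" using n0p by (intro mult_right_mono) auto
    then show ?thesis by (simp add: algebra_simps power2_eq_square)
  qed
  show "(7/8) * kap * ell * n0 < N0"
    using t1 t2 t3 t5 N0 by linarith
qed


lemma core:
  fixes lam :: "real \<Rightarrow> real" and xi' :: "real \<Rightarrow> vec2" and u :: vec2 and L a0 B cc kap :: real
  assumes lf: "L2_fun lam" and ln: "L2_norm lam \<noteq> 0"
    and xim: "xi' \<in> borel_measurable M01"
    and abnd: "AE t in M01. a0 \<le> u \<bullet> xi' t \<and> u \<bullet> xi' t \<le> a0 + 2 * B"
    and u: "norm u = 1" and B0: "0 \<le> B" and BL: "B \<le> \<bar>L\<bar>"
    and ca: "cc \<le> a0" and cL: "cc \<le> \<bar>L\<bar>" and c0: "0 < cc" and kap: "0 < kap"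
    and kc: "9 * kap^2 \<le> 4 * cc^2"
  shows "\<exists>dL dxi dxi'. in_dX dxi dxi' \<and> Z2_norm dL dxi dxi' \<noteq> 0 \<and>
      kap \<le> integral\<^sup>L M01 (\<lambda>t. lam t * (2 * (xi' t \<bullet> dxi' t) - 2 * L * dL))
              / (L2_norm lam * Z2_norm dL dxi dxi')"
proof -
  have lm: "lam \<in> borel_measurable M01" and l2: "integrable M01 (\<lambda>t. (lam t)^2)"
    using lf unfolding L2_fun_def by auto
  define ell where "ell = L2_norm lam"
  have ell_eq: "ell = sqrt (integral\<^sup>L M01 (\<lambda>t. (lam t)^2))" unfolding ell_def L2_norm_def by simp
  have I0: "0 \<le> integral\<^sup>L M01 (\<lambda>t. (lam t)^2)" by (rule integral_nonneg_AE) simp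
  have "0 \<le> ell" unfolding ell_eq by simp
  moreover have "ell \<noteq> 0" using ln unfolding ell_def .
  ultimately have ell_pos: "0 < ell" by linarith
  have ell2: "ell^2 = integral\<^sup>L M01 (\<lambda>t. (lam t)^2)" using ell_eq I0 by simp
  define m where "m = integral\<^sup>L M01 lam"
  define a where "a = (\<lambda>t. u \<bullet> xi' t)"
  have am: "a \<in> borel_measurable M01" unfolding a_def using xim by measurable
  have abnd': "AE t in M01. a0 \<le> a t \<and> a t \<le> a0 + 2 * B" using abnd unfolding a_def .
  show ?thesis
  proof (cases "kap * ell \<le> 2 * \<bar>L\<bar> * \<bar>m\<bar>")
    case True
    have "0 < kap * ell" using kap ell_pos by simp
    then have "0 < 2 * (\<bar>L\<bar> * \<bar>m\<bar>)" using True by (simp add: mult.assoc)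
    then have pos: "0 < \<bar>L\<bar> * \<bar>m\<bar>" by simp
    have W0: "in_dX (\<lambda>t. 0) (\<lambda>t. 0)" unfolding in_dX_def W1inf_def
      by (simp, intro exI[of _ 0]) simp
    have Z: "Z2_norm (- L * m) (\<lambda>t. 0) (\<lambda>t. 0) = \<bar>L\<bar> * \<bar>m\<bar>"
      unfolding Z2_norm_def L2_norm_def by (simp add: abs_mult)
    have I: "integral\<^sup>L M01 (\<lambda>t. lam t * (2 * (xi' t \<bullet> 0) - 2 * L * (- L * m))) = (2 * L^2 * m) * m"
    proof -
      have "(\<lambda>t. lam t * (2 * (xi' t \<bullet> 0) - 2 * L * (- L * m))) = (\<lambda>t. lam t * (2 * L^2 * m))"
        by (simp add: power2_eq_square mult.assoc)
      then show ?thesis by (simp add: m_def)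
    qed
    have KK: "kap \<le> (2 * L^2 * m) * m / (ell * (\<bar>L\<bar> * \<bar>m\<bar>))"
    proof -
      have "kap * ell * (\<bar>L\<bar> * \<bar>m\<bar>) \<le> 2 * \<bar>L\<bar> * \<bar>m\<bar> * (\<bar>L\<bar> * \<bar>m\<bar>)"
        using True pos by (intro mult_right_mono) auto
      also have "\<dots> = (2 * L^2 * m) * m"
        by (simp add: power2_eq_square abs_mult_self_eq algebra_simps)
      finally show ?thesis using pos ell_pos by (simp add: pos_le_divide_eq mult.assoc)
    qed
    show ?thesis
    proof (intro exI[of _ "- L * m"] exI[of _ "\<lambda>t. 0"] conjI)
      show "in_dX (\<lambda>t. 0) (\<lambda>t. 0)" by (rule W0)
      show "Z2_norm (- L * m) (\<lambda>t. 0) (\<lambda>t. 0) \<noteq> 0" unfolding Z using pos by linarith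
      show "kap \<le> integral\<^sup>L M01 (\<lambda>t. lam t * (2 * (xi' t \<bullet> 0) - 2 * L * (- L * m)))
              / (L2_norm lam * Z2_norm (- L * m) (\<lambda>t. 0) (\<lambda>t. 0))"
        unfolding I Z using KK unfolding ell_def .
    qed
  next
    case False
    then have F: "2 * \<bar>L\<bar> * \<bar>m\<bar> < kap * ell" by simp
    define A where "A = \<bar>a0\<bar> + 2 * B"
    have aA: "AE t in M01. \<bar>a t\<bar> \<le> A" using abnd' unfolding A_def by eventually_elim auto
    define T where "T = (\<lambda>(N::nat) t. max (- real N) (min (real N) (lam t)))"
    define mN where "mN = (\<lambda>N. integral\<^sup>L M01 (T N))"
    note TL = trunc_limits[OF lm l2 am aA]
    have lim_m: "mN \<longlonglongrightarrow> m" using TL(1) unfolding T_def mN_def m_def .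
    have lim_N: "(\<lambda>N. integral\<^sup>L M01 (\<lambda>t. lam t * a t * (T N t - mN N)))
           \<longlonglongrightarrow> integral\<^sup>L M01 (\<lambda>t. lam t * a t * (lam t - m))"
      using TL(2) unfolding T_def mN_def m_def .
    have lim_q: "(\<lambda>N. integral\<^sup>L M01 (\<lambda>t. (T N t - mN N)^2)) \<longlonglongrightarrow> integral\<^sup>L M01 (\<lambda>t. (lam t - m)^2)"
      using TL(3) unfolding T_def mN_def m_def .
    have Tm: "T N \<in> borel_measurable M01" for N using TL(4) unfolding T_def .
    have Tb: "\<bar>T N t\<bar> \<le> real N" for N t using TL(5) unfolding T_def .
    have iT: "integrable M01 (T N)" for N using TL(6) unfolding T_def .
    note NB = N0_bound[OF lm l2 am abnd' B0]
    define N0 where "N0 = integral\<^sup>L M01 (\<lambda>t. lam t * a t * (lam t - m))"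
    define q0 where "q0 = integral\<^sup>L M01 (\<lambda>t. (lam t - m)^2)"
    define n0 where "n0 = sqrt q0"
    have q0eq: "q0 = ell^2 - m^2" using NB(1) ell2 unfolding q0_def m_def by simp
    have Nb: "a0 * n0^2 - \<bar>m\<bar> * B * n0 \<le> N0" using NB(2) unfolding N0_def n0_def q0_def m_def .
    have AR: "0 < n0" "(7/8) * kap * ell * n0 < N0"
      by (rule arithB[OF F cL kc c0 kap ell_pos _ ca BL B0 Nb], simp add: n0_def q0eq)+
    have lim1: "(\<lambda>N. integral\<^sup>L M01 (\<lambda>t. lam t * a t * (T N t - mN N))
                  - (7/8) * kap * ell * sqrt (integral\<^sup>L M01 (\<lambda>t. (T N t - mN N)^2)))
                \<longlonglongrightarrow> N0 - (7/8) * kap * ell * n0"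
      unfolding N0_def n0_def q0_def by (intro tendsto_intros lim_N lim_q)
    have lim2: "(\<lambda>N. sqrt (integral\<^sup>L M01 (\<lambda>t. (T N t - mN N)^2))) \<longlonglongrightarrow> n0"
      unfolding n0_def q0_def by (intro tendsto_intros lim_q)
    have ev: "eventually (\<lambda>N. 0 < integral\<^sup>L M01 (\<lambda>t. lam t * a t * (T N t - mN N))
                  - (7/8) * kap * ell * sqrt (integral\<^sup>L M01 (\<lambda>t. (T N t - mN N)^2))
              \<and> 0 < sqrt (integral\<^sup>L M01 (\<lambda>t. (T N t - mN N)^2))) sequentially"
      using order_tendstoD(1)[OF lim1, of 0] order_tendstoD(1)[OF lim2, of 0] AR
      by (intro eventually_conj) auto
    then obtain N where
      N1: "(7/8) * kap * ell * sqrt (integral\<^sup>L M01 (\<lambda>t. (T N t - mN N)^2))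
              < integral\<^sup>L M01 (\<lambda>t. lam t * a t * (T N t - mN N))"
      and N2: "0 < sqrt (integral\<^sup>L M01 (\<lambda>t. (T N t - mN N)^2))"
      unfolding eventually_sequentially by auto
    define phi where "phi = (\<lambda>t. T N t - mN N)"
    have phim: "phi \<in> borel_measurable M01" unfolding phi_def using Tm[of N] by measurable
    have phib: "\<bar>phi t\<bar> \<le> real N + \<bar>mN N\<bar>" for t
      unfolding phi_def using Tb[of N t] by linarith
    have phi0: "integral\<^sup>L M01 phi = 0" unfolding phi_def using iT[of N] by (simp add: mN_def)
    note DX = dxi_lemma[OF phim phib phi0 u]
    define dxi where "dxi = (\<lambda>t. integral\<^sup>L (lebesgue_on {0..t}) (\<lambda>s. phi s *\<^sub>R u))"
    define dxi' where "dxi' = (\<lambda>s. phi s *\<^sub>R u)"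
    define sq where "sq = sqrt (integral\<^sup>L M01 (\<lambda>s. (phi s)^2))"
    have sqp: "0 < sq" using N2 unfolding sq_def phi_def .
    have inX: "in_dX dxi dxi'" using DX(1) unfolding dxi_def dxi'_def .
    have Zeq: "Z2_norm 0 dxi dxi' = L2_norm dxi + sq"
      unfolding Z2_norm_def using DX(2) unfolding dxi'_def sq_def by simp
    have Ldx0: "0 \<le> L2_norm dxi" unfolding L2_norm_def by simp
    have Ldx: "L2_norm dxi \<le> (3/4) * sq" using DX(3) unfolding dxi_def sq_def .
    have Zpos: "0 < Z2_norm 0 dxi dxi'" using Zeq Ldx0 sqp by linarith
    have Zle: "Z2_norm 0 dxi dxi' \<le> (7/4) * sq" using Zeq Ldx by linarith
    have Ieq: "integral\<^sup>L M01 (\<lambda>t. lam t * (2 * (xi' t \<bullet> dxi' t) - 2 * L * 0))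
             = 2 * integral\<^sup>L M01 (\<lambda>t. lam t * a t * (T N t - mN N))"
    proof -
      have "(\<lambda>t. lam t * (2 * (xi' t \<bullet> dxi' t) - 2 * L * 0)) = (\<lambda>t. 2 * (lam t * a t * (T N t - mN N)))"
        unfolding dxi'_def phi_def a_def by (simp add: inner_commute algebra_simps)
      then show ?thesis by simp
    qed
    have N1': "(7/8) * kap * ell * sq < integral\<^sup>L M01 (\<lambda>t. lam t * a t * (T N t - mN N))"
      using N1 unfolding sq_def phi_def .
    have KK: "kap \<le> 2 * integral\<^sup>L M01 (\<lambda>t. lam t * a t * (T N t - mN N)) / (ell * Z2_norm 0 dxi dxi')"
    proof -
      have "kap * (ell * Z2_norm 0 dxi dxi') \<le> kap * (ell * ((7/4) * sq))"
        using Zle kap ell_pos by (intro mult_left_mono) auto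
      also have "\<dots> = 2 * ((7/8) * kap * ell * sq)" by simp
      also have "\<dots> \<le> 2 * integral\<^sup>L M01 (\<lambda>t. lam t * a t * (T N t - mN N))" using N1' by linarith
      finally show ?thesis using Zpos ell_pos by (simp add: pos_le_divide_eq)
    qed
    show ?thesis
    proof (rule exI[of _ 0], rule exI[of _ dxi], rule exI[of _ dxi'], intro conjI)
      show "in_dX dxi dxi'" by (rule inX)
      show "Z2_norm 0 dxi dxi' \<noteq> 0" using Zpos by simp
      show "kap \<le> integral\<^sup>L M01 (\<lambda>t. lam t * (2 * (xi' t \<bullet> dxi' t) - 2 * L * 0))
              / (L2_norm lam * Z2_norm 0 dxi dxi')"
        unfolding Ieq using KK unfolding ell_def .
    qed
  qed
qed



theorem theorem8:
  fixes vbar c0 c R Lstar L :: real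
    and xO xD u :: vec2
    and w :: "vec2 \<Rightarrow> vec2"
    and \<Omega> :: "vec2 set"
    and xistar xistar' xi xi' :: "real \<Rightarrow> vec2"
  assumes vbar_pos: "vbar > 0"
    and foci: "xO \<noteq> xD"
    and w_C3: "C3_map w"
    and w_bound: "\<forall>x. norm (w x) < vbar"
    and ellipse: "\<exists>a > dist xO xD. \<Omega> = {x. dist x xO + dist x xD \<le> a}"
    and Omega_contains: "\<forall>L1 eta eta'. global_min_P vbar w xO xD L1 eta eta' \<longrightarrow>
                            (\<forall>t\<in>{0..1}. eta t \<in> \<Omega>)"
    and c0_lt: "c0 < vbar"
    and c0_bound: "\<forall>x\<in>\<Omega>. norm (w x) \<le> c0"
    and zstar_min: "global_min_P vbar w xO xD Lstar xistar xistar'"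
    and c_pos: "c > 0"
    and u_unit: "norm u = 1"
    and u_dir: "AE t in M01. u \<bullet> xistar' t \<ge> c"
    and z_in_Z: "in_X xO xD xi xi'"
    and z_close: "Zinf_norm (L - Lstar) (\<lambda>t. xi t - xistar t) (\<lambda>t. xi' t - xistar' t) \<le> R"
    and R_lt_c: "R < c"
  shows "(INF lam \<in> {lam. L2_fun lam \<and> L2_norm lam \<noteq> 0}.
            SUP dz \<in> {(dL, dxi, dxi'). in_dX dxi dxi' \<and> Z2_norm dL dxi dxi' \<noteq> 0}.
              (case dz of (dL, dxi, dxi') \<Rightarrow>
                 ereal (integral\<^sup>L M01 (\<lambda>t. lam t * (2 * (xi' t \<bullet> dxi' t) - 2 * L * dL))
                        / (L2_norm lam * Z2_norm dL dxi dxi'))))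
         \<ge> ereal ((c - R) / sqrt (3/8 + 2 * ((vbar + c0) / (vbar - c0) + R / dist xO xD)\<^sup>2))
       \<and> (c - R) / sqrt (3/8 + 2 * ((vbar + c0) / (vbar - c0) + R / dist xO xD)\<^sup>2) > 0"
proof -
  have W: "W1inf xi xi'" and xi0: "xi 0 = xO" using z_in_Z unfolding in_X_def by auto
  have Ws: "W1inf xistar xistar'" and fs: "AE t in M01. (norm (xistar' t))\<^sup>2 = Lstar\<^sup>2"
    using zstar_min unfolding global_min_P_def feasibleP_def in_X_def by auto
  obtain C1 where C1: "AE t in M01. norm (xi' t) \<le> C1" using W unfolding W1inf_def by blast
  obtain C2 where C2: "AE t in M01. norm (xistar' t) \<le> C2" using Ws unfolding W1inf_def by blast
  have xim: "xi' \<in> borel_measurable M01" using W unfolding W1inf_def by blast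
  define d1 where "d1 = \<bar>L - Lstar\<bar>"
  define d2 where "d2 = Linf_norm (\<lambda>t. xi t - xistar t)"
  define d3 where "d3 = Linf_norm (\<lambda>t. xi' t - xistar' t)"
  have b3: "\<exists>C. AE t in M01. norm (xi' t - xistar' t) \<le> C"
  proof (intro exI[of _ "C1 + C2"])
    show "AE t in M01. norm (xi' t - xistar' t) \<le> C1 + C2"
      using C1 C2 by eventually_elim (metis add_mono norm_triangle_ineq4 order_trans)
  qed
  have b2: "\<exists>C. AE t in M01. norm (xi t - xistar t) \<le> C"
  proof -
    obtain D1 where D1: "AE t in M01. norm (xi t) \<le> D1" using xi_bdd[OF W] by blast
    obtain D2 where D2: "AE t in M01. norm (xistar t) \<le> D2" using xi_bdd[OF Ws] by blast
    show ?thesis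
    proof (intro exI[of _ "D1 + D2"])
      show "AE t in M01. norm (xi t - xistar t) \<le> D1 + D2"
        using D1 D2 by eventually_elim (metis add_mono norm_triangle_ineq4 order_trans)
    qed
  qed
  have d3p: "0 \<le> d3" and d3AE: "AE t in M01. norm (xi' t - xistar' t) \<le> d3"
    using Linf_props[OF b3] unfolding d3_def by auto
  have d2p: "0 \<le> d2" using Linf_props[OF b2] unfolding d2_def by auto
  have d1p: "0 \<le> d1" unfolding d1_def by simp
  have dsum: "d1 + d2 + d3 \<le> R" using z_close unfolding Zinf_norm_def d1_def d2_def d3_def .
  define P where "P = \<bar>Lstar\<bar>"
  have fsP: "AE t in M01. norm (xistar' t) = P"
    using fs
  proof eventually_elim
    fix t assume "(norm (xistar' t))\<^sup>2 = Lstar\<^sup>2"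
    then have "sqrt ((norm (xistar' t))\<^sup>2) = sqrt (Lstar\<^sup>2)" by simp
    then show "norm (xistar' t) = P" unfolding P_def by simp
  qed
  have key: "AE t in M01. c \<le> u \<bullet> xistar' t \<and> u \<bullet> xistar' t \<le> P
                \<and> c - d3 \<le> u \<bullet> xi' t \<and> u \<bullet> xi' t \<le> P + d3"
    using u_dir fsP d3AE
  proof eventually_elim
    fix t assume h1: "c \<le> u \<bullet> xistar' t" and h2: "norm (xistar' t) = P"
      and h3: "norm (xi' t - xistar' t) \<le> d3"
    have "u \<bullet> xistar' t \<le> norm u * norm (xistar' t)" by (rule norm_cauchy_schwarz)
    then have s1: "u \<bullet> xistar' t \<le> P" using u_unit h2 by simp
    have "\<bar>u \<bullet> (xi' t - xistar' t)\<bar> \<le> norm u * norm (xi' t - xistar' t)" by (rule Cauchy_Schwarz_ineq2)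
    then have "\<bar>u \<bullet> xi' t - u \<bullet> xistar' t\<bar> \<le> d3" using u_unit h3 by (simp add: inner_diff_right)
    then show "c \<le> u \<bullet> xistar' t \<and> u \<bullet> xistar' t \<le> P \<and> c - d3 \<le> u \<bullet> xi' t \<and> u \<bullet> xi' t \<le> P + d3"
      using h1 s1 by linarith
  qed
  obtain t0 where "c \<le> u \<bullet> xistar' t0 \<and> u \<bullet> xistar' t0 \<le> P" using M01_ex[OF key] by blast
  then have cP: "c \<le> P" by linarith
  define B where "B = (P + 2 * d3 - c) / 2"
  define a0 where "a0 = c - d3"
  define cc where "cc = c - R"
  have abnd: "AE t in M01. a0 \<le> u \<bullet> xi' t \<and> u \<bullet> xi' t \<le> a0 + 2 * B"
  proof -
    have e: "a0 + 2 * B = P + d3" unfolding a0_def B_def by (simp add: field_simps)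
    show ?thesis unfolding e using key unfolding a0_def by eventually_elim auto
  qed
  have Rp: "0 \<le> R" using dsum d1p d2p d3p by linarith
  have cc0: "0 < cc" unfolding cc_def using R_lt_c by simp
  have LP: "P - d1 \<le> \<bar>L\<bar>" unfolding P_def d1_def by linarith
  have B0: "0 \<le> B" unfolding B_def using cP d3p by simp
  have "P + 2 * d3 - c \<le> 2 * \<bar>L\<bar>" using LP cP dsum d2p R_lt_c by linarith
  then have BL: "B \<le> \<bar>L\<bar>" unfolding B_def by simp
  have ca: "cc \<le> a0" unfolding cc_def a0_def using dsum d1p d2p by linarith
  have cL: "cc \<le> \<bar>L\<bar>" unfolding cc_def using LP cP dsum d2p d3p by linarith
  define X where "X = (vbar + c0) / (vbar - c0) + R / dist xO xD"
  define Q where "Q = sqrt (3/8 + 2 * X\<^sup>2)"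
  define kap where "kap = (c - R) / Q"
  obtain a where a: "a > dist xO xD" "\<Omega> = {x. dist x xO + dist x xD \<le> a}" using ellipse by blast
  have "xO \<in> \<Omega>" using a by simp
  then have c0p: "0 \<le> c0" using c0_bound by (metis norm_ge_zero order_trans)
  have vc: "0 < vbar - c0" using c0_lt by simp
  have X1: "1 \<le> X"
  proof -
    have "1 \<le> (vbar + c0) / (vbar - c0)" using vc c0p by (simp add: le_divide_eq)
    moreover have "0 \<le> R / dist xO xD" using Rp by simp
    ultimately show ?thesis unfolding X_def by linarith
  qed
  have Q2: "Q\<^sup>2 = 3/8 + 2 * X\<^sup>2" unfolding Q_def by (simp add: add_nonneg_nonneg)
  have Qp: "0 < Q" unfolding Q_def by (simp add: add_pos_nonneg)
  have X2: "1 \<le> X\<^sup>2" using X1 by (simp add: one_le_power)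
  have kap_pos: "0 < kap" unfolding kap_def using R_lt_c Qp by simp
  have kc: "9 * kap\<^sup>2 \<le> 4 * cc\<^sup>2"
  proof -
    have "kap\<^sup>2 * Q\<^sup>2 = cc\<^sup>2" unfolding kap_def cc_def using Qp by (simp add: power_divide)
    moreover have "9/4 \<le> Q\<^sup>2" using Q2 X2 by linarith
    ultimately have "kap\<^sup>2 * (9/4) \<le> cc\<^sup>2"
      by (metis mult_left_mono zero_le_power2)
    then show ?thesis by linarith
  qed
  have main: "ereal kap \<le> (INF lam \<in> {lam. L2_fun lam \<and> L2_norm lam \<noteq> 0}.
            SUP dz \<in> {(dL, dxi, dxi'). in_dX dxi dxi' \<and> Z2_norm dL dxi dxi' \<noteq> 0}.
              (case dz of (dL, dxi, dxi') \<Rightarrow>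
                 ereal (integral\<^sup>L M01 (\<lambda>t. lam t * (2 * (xi' t \<bullet> dxi' t) - 2 * L * dL))
                        / (L2_norm lam * Z2_norm dL dxi dxi'))))"
  proof (rule INF_greatest)
    fix lam assume "lam \<in> {lam. L2_fun lam \<and> L2_norm lam \<noteq> 0}"
    then have lf: "L2_fun lam" and ln: "L2_norm lam \<noteq> 0" by auto
    obtain dL dxi dxi' where D: "in_dX dxi dxi'" "Z2_norm dL dxi dxi' \<noteq> 0"
      "kap \<le> integral\<^sup>L M01 (\<lambda>t. lam t * (2 * (xi' t \<bullet> dxi' t) - 2 * L * dL))
              / (L2_norm lam * Z2_norm dL dxi dxi')"
      using core[OF lf ln xim abnd u_unit B0 BL ca cL cc0 kap_pos kc] by blast
    show "ereal kap \<le> (SUP dz \<in> {(dL, dxi, dxi'). in_dX dxi dxi' \<and> Z2_norm dL dxi dxi' \<noteq> 0}.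
              (case dz of (dL, dxi, dxi') \<Rightarrow>
                 ereal (integral\<^sup>L M01 (\<lambda>t. lam t * (2 * (xi' t \<bullet> dxi' t) - 2 * L * dL))
                        / (L2_norm lam * Z2_norm dL dxi dxi'))))"
      by (rule SUP_upper2[of "(dL, dxi, dxi')"]) (use D in auto)
  qed
  show ?thesis
    using main kap_pos unfolding kap_def Q_def X_def by simp
qed

end
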